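(* Let $\mathbf L\in\mathbb R_+^{n\times k}$ and let $\boldsymbol\psi:\mathcal C\to\mathbb R_+^n$ be $\mathbf L$-calibrated. Then for every point $\mathbf z\in\mathcal S_\psi$ there exists $t\in[k]$ such that $\mathcal N^\psi(\mathbf z)\subseteq\mathcal Q^{\mathbf L}_t$.
   Context: Notation: $[m]=\{1,\dots,m\}$; $\Delta_n=\{\mathbf p\in\mathbb R_+^n:\sum_i p_i=1\}$. A loss matrix $\mathbf L\in\mathbb R_+^{n\times k}$ has columns $\boldsymbol\ell_t$, $t\in[k]$. Standing assumption: for each $t\in[k]$ there is $\mathbf p\in\Delta_n$ with $\operatorname{argmin}_{t'}\mathbf p^\top\boldsymbol\ell_{t'}=\{t\}$. A surrogate loss is $\boldsymbol\psi:\mathcal C\to\mathbb R_+^n$ with $\mathcal C\subseteq\mathbb R^d$ convex; $\mathcal R_\psi=\boldsymbol\psi(\mathcal C)$, $\mathcal S_\psi=\operatorname{conv}(\mathcal R_\psi)$. $\boldsymbol\psi$ is $\mathbf L$-calibrated if there is $\mathrm{pred}:\mathcal C\to[k]$ such that for all $\mathbf p\in\Delta_n$: $\inf_{\mathbf u\in\mathcal C:\mathrm{pred}(\mathbf u)\notin\operatorname{argmin}_t\mathbf p^\top\boldsymbol\ell_t}\mathbf p^\top\boldsymbol\psi(\mathbf u)>\inf_{\mathbf u\in\mathcal C}\mathbf p^\top\boldsymbol\psi(\mathbf u)$. Trigger probability set: $\mathcal Q^{\mathbf L}_t=\{\mathbf p\in\Delta_n: t\in\operatorname{argmin}_{t'\in[k]}\mathbf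 p^\top\boldsymbol\ell_{t'}\}$. Positive normal set at $\mathbf z\in\mathcal S_\psi$: $\mathcal N^\psi(\mathbf z)=\{\mathbf p\in\Delta_n:\mathbf p^\top\mathbf z=\inf_{\mathbf z'\in\mathcal S_\psi}\mathbf p^\top\mathbf z'\}$. *)

theory Defs
  imports "HOL-Analysis.Analysis" "HOL-Library.Extended_Real"
begin

definition prob_simplex :: "(real ^ 'n::finite) set" where
  "prob_simplex = {p. (\<forall>i. 0 \<le> p $ i) \<and> sum (\<lambda>i. p $ i) UNIV = 1}"

text \<open>Loss matrix L in R_+^(n x k): L $ i $ t; the column l_t is column t L.\<close>
definition loss_matrix :: "real ^ 'k::finite ^ 'n::finite \<Rightarrow> bool" where
  "loss_matrix L \<longleftrightarrow> (\<forall>i t. 0 \<le> L $ i $ t)"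

definition argmin_loss :: "real ^ 'k::finite ^ 'n::finite \<Rightarrow> real ^ 'n \<Rightarrow> 'k set" where
  "argmin_loss L p = {t. \<forall>t'. p \<bullet> column t L \<le> p \<bullet> column t' L}"

definition standing_assumption :: "real ^ 'k::finite ^ 'n::finite \<Rightarrow> bool" where
  "standing_assumption L \<longleftrightarrow> (\<forall>t. \<exists>p\<in>prob_simplex. argmin_loss L p = {t})"

definition surrogate :: "('d::euclidean_space) set \<Rightarrow> ('d \<Rightarrow> real ^ 'n::finite) \<Rightarrow> bool" where
  "surrogate C psi \<longleftrightarrow> convex C \<and> (\<forall>u\<in>C. \<forall>i. 0 \<le> psi u $ i)"

text \<open>Calibration; infima taken in the extended reals (inf of empty set = +infinity).\<close>
definition calibrated ::
  "real ^ 'k::finite ^ 'n::finite \<Rightarrow> ('d::euclidean_space) set \<Rightarrow> ('d \<Rightarrow> real ^ 'n) \<Rightarrow> bool" where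
  "calibrated L C psi \<longleftrightarrow> (\<exists>pred :: 'd \<Rightarrow> 'k. \<forall>p\<in>prob_simplex.
     (INF u\<in>{u\<in>C. pred u \<notin> argmin_loss L p}. ereal (p \<bullet> psi u))
       > (INF u\<in>C. ereal (p \<bullet> psi u)))"

definition S_psi :: "('d::euclidean_space) set \<Rightarrow> ('d \<Rightarrow> real ^ 'n::finite) \<Rightarrow> (real ^ 'n) set" where
  "S_psi C psi = convex hull (psi ` C)"

definition trigger_set :: "real ^ 'k::finite ^ 'n::finite \<Rightarrow> 'k \<Rightarrow> (real ^ 'n) set" where
  "trigger_set L t = {p\<in>prob_simplex. t \<in> argmin_loss L p}"

definition normal_set ::
  "('d::euclidean_space) set \<Rightarrow> ('d \<Rightarrow> real ^ 'n::finite) \<Rightarrow> real ^ 'n \<Rightarrow> (real ^ 'n) set" where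
  "normal_set C psi z = {p\<in>prob_simplex. p \<bullet> z = (INF z'\<in>S_psi C psi. p \<bullet> z')}"

end

theory Submission
  imports Defs
begin

theorem mainTheorem3:
  fixes L :: "real ^ 'k::finite ^ 'n::finite"
    and C :: "'d::euclidean_space set"
    and psi :: "'d \<Rightarrow> real ^ 'n"
  assumes "loss_matrix L"
    and "standing_assumption L"
    and "surrogate C psi"
    and "calibrated L C psi"
  shows "\<forall>z\<in>S_psi C psi. \<exists>t. normal_set C psi z \<subseteq> trigger_set L t"
proof
  fix z assume z: "z \<in> S_psi C psi"
  obtain pred :: "'d \<Rightarrow> 'k" where pred: "\<And>p. p\<in>prob_simplex \<Longrightarrow>
     (INF u\<in>{u\<in>C. pred u \<notin> argmin_loss L p}. ereal (p \<bullet> psi u))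
       > (INF u\<in>C. ereal (p \<bullet> psi u))"
    using assms(4) unfolding calibrated_def by blast
  have nn: "\<And>u i. u \<in> C \<Longrightarrow> 0 \<le> psi u $ i" using assms(3) unfolding surrogate_def by blast
  obtain S w where S: "finite S" "S \<subseteq> psi ` C" "\<forall>x\<in>S. 0 \<le> w x" "sum w S = 1"
    "sum (\<lambda>v. w v *\<^sub>R v) S = z"
    using z unfolding S_psi_def convex_hull_explicit by blast
  obtain v where v: "v \<in> S" "w v > 0"
  proof (rule ccontr)
    assume "\<not> thesis"
    then have "\<forall>x\<in>S. w x \<le> 0" using that by force
    then have "sum w S \<le> 0" by (simp add: sum_nonpos)
    then show False using S(4) by simp
  qed
  obtain u1 where u1: "u1 \<in> C" "v = psi u1" using v S(2) by blast
  have hull_nn: "convex hull (psi ` C) \<subseteq> {x. \<forall>i. 0 \<le> x $ i}"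
  proof (rule hull_minimal)
    show "psi ` C \<subseteq> {x. \<forall>i. 0 \<le> x $ i}" using nn by blast
    show "convex {x::real^'n. \<forall>i. 0 \<le> x $ i}"
      unfolding convex_def by clarsimp
  qed
  show "\<exists>t. normal_set C psi z \<subseteq> trigger_set L t"
  proof (intro exI subsetI)
    fix p assume "p \<in> normal_set C psi z"
    then have p: "p \<in> prob_simplex" and pz: "p \<bullet> z = (INF z'\<in>S_psi C psi. p \<bullet> z')"
      unfolding normal_set_def by auto
    have pnn: "\<And>i. 0 \<le> p $ i" using p unfolding prob_simplex_def by auto
    have nonneg: "0 \<le> p \<bullet> x" if "x \<in> S_psi C psi" for x
    proof -
      have "\<forall>i. 0 \<le> x $ i" using hull_nn that unfolding S_psi_def by blast
      then show ?thesis unfolding inner_vec_def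
        by (auto intro!: sum_nonneg mult_nonneg_nonneg pnn)
    qed
    have bdd: "bdd_below ((\<lambda>z'. p \<bullet> z') ` S_psi C psi)"
      using nonneg by (intro bdd_belowI2[of _ 0]) auto
    define m where "m = p \<bullet> z"
    have low: "m \<le> p \<bullet> x" if "x \<in> S_psi C psi" for x
      unfolding m_def pz using bdd that by (intro cInf_lower imageI)
    have inS: "\<And>x. x \<in> S \<Longrightarrow> x \<in> S_psi C psi"
      using S(2) unfolding S_psi_def by (meson hull_subset subsetD)
    have "(\<Sum>x\<in>S. w x * (p \<bullet> x - m)) = (\<Sum>x\<in>S. w x * (p \<bullet> x)) - m * sum w S"
      by (simp add: right_diff_distrib sum_subtractf sum_distrib_left mult.commute)
    also have "(\<Sum>x\<in>S. w x * (p \<bullet> x)) = p \<bullet> z"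
      using S(5)[symmetric] by (simp add: inner_sum_right)
    finally have A: "(\<Sum>x\<in>S. w x * (p \<bullet> x - m)) = 0" using S(4) m_def by simp
    have B: "\<And>x. x \<in> S \<Longrightarrow> 0 \<le> w x * (p \<bullet> x - m)"
      using S(3) low inS by (auto intro!: mult_nonneg_nonneg)
    have "w v * (p \<bullet> v - m) = 0"
      using sum_nonneg_eq_0_iff[OF S(1) B] A v(1) by simp
    then have pv: "p \<bullet> v = m" using v(2) by simp
    have opt: "p \<bullet> psi u1 \<le> p \<bullet> psi u" if "u \<in> C" for u
    proof -
      have "psi u \<in> S_psi C psi" using that unfolding S_psi_def by (meson hull_subset imageI subsetD)
      then show ?thesis using low pv u1(2) by simp
    qed
    have eq: "(INF u\<in>C. ereal (p \<bullet> psi u)) = ereal (p \<bullet> psi u1)"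
      by (rule antisym) (auto intro!: INF_lower INF_greatest u1(1) opt)
    have "pred u1 \<in> argmin_loss L p"
    proof (rule ccontr)
      assume "pred u1 \<notin> argmin_loss L p"
      then have "(INF u\<in>{u\<in>C. pred u \<notin> argmin_loss L p}. ereal (p \<bullet> psi u)) \<le> ereal (p \<bullet> psi u1)"
        using u1(1) by (intro INF_lower) auto
      then show False using pred[OF p] eq by simp
    qed
    then show "p \<in> trigger_set L (pred u1)" unfolding trigger_set_def using p by simp
  qed
qed

end
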